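(* Let $f:\mathbb{R}^n\to\mathbb{R}$ be continuously differentiable, let $s$ be an integer with $0<s<n$, and let $L>0$. Then $\mathbf{x}^*\in\mathbb{R}^n$ satisfies $\mathbf{x}^*\in C_s$ and $\mathbf{x}^*\in P_{C_s}\!\left(\mathbf{x}^*-\frac{1}{L}\nabla f(\mathbf{x}^* )\right)$ if and only if $\|\mathbf{x}^*\|_0\le s$ and $$|\nabla_i f(\mathbf{x}^* )|\ \begin{cases}\le L\,M_s(\mathbf{x}^* ) & \text{if } i\in I_0(\mathbf{x}^* ),\\ =0 & \text{if } i\in I_1(\mathbf{x}^* ).\end{cases}$$
   Context: $\|\mathbf{x}\|_0$ is the number of nonzero components of $\mathbf{x}$ and $C_s=\{\mathbf{x}:\|\mathbf{x}\|_0\le s\}$. $I_1(\mathbf{x})=\{i:x_i\neq0\}$ and $I_0(\mathbf{x})=\{i:x_i=0\}$. $M_i(\mathbf{x})$ denotes the $i$-th largest absolute value among the components of $\mathbf{x}$ (so $M_1(\mathbf{x})\ge\dots\ge M_n(\mathbf{x})$). For a closed set $D$, $P_D(\mathbf{y})=\operatorname{argmin}_{\mathbf{x}\in D}\|\mathbf{x}-\mathbf{y}\|^2$ is the (possibly multi-valued) set of orthogonal projections of $\mathbf{y}$ onto $D$; in particular $P_{C_s}(\mathbf{y})$ is the set of vectors obtained by keeping $s$ components of $\mathbf{y}$ of largest absolute value and setting the rest to zero. *)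

theory Defs
  imports "HOL-Analysis.Analysis" "HOL-Library.Multiset"
begin

definition l0norm :: "real ^ 'n \<Rightarrow> nat" where
  "l0norm x = card {i. x $ i \<noteq> 0}"

definition sparse_set :: "nat \<Rightarrow> (real ^ 'n) set" where
  "sparse_set s = {x. l0norm x \<le> s}"

definition I1 :: "real ^ 'n \<Rightarrow> 'n set" where
  "I1 x = {i. x $ i \<noteq> 0}"

definition I0 :: "real ^ 'n \<Rightarrow> 'n set" where
  "I0 x = {i. x $ i = 0}"

text \<open>M k x: the k-th largest absolute value among the components of x (k = 1..n).\<close>
definition Mlarg :: "nat \<Rightarrow> real ^ 'n \<Rightarrow> real" where
  "Mlarg k x = rev (sorted_list_of_multiset (image_mset (\<lambda>i. \<bar>x $ i\<bar>) (mset_set (UNIV :: 'n set)))) ! (k - 1)"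

definition proj :: "(real ^ 'n) set \<Rightarrow> real ^ 'n \<Rightarrow> (real ^ 'n) set" where
  "proj D y = {x \<in> D. \<forall>z \<in> D. (norm (x - y))\<^sup>2 \<le> (norm (z - y))\<^sup>2}"

end

theory Submission imports Defs begin

lemma Mlarg_props:
  fixes x :: "real^'n"
  assumes s0: "0 < s" and sn: "s \<le> CARD('n)"
  shows "Mlarg s x \<ge> 0 \<and> (\<exists>j. Mlarg s x = \<bar>x$j\<bar>) \<and>
         card {i. \<bar>x$i\<bar> > Mlarg s x} \<le> s - 1 \<and> s \<le> card {i. \<bar>x$i\<bar> \<ge> Mlarg s x}"
proof -
  define ms where "ms = image_mset (\<lambda>i. \<bar>x$i\<bar>) (mset_set (UNIV::'n set))"
  define Ls where "Ls = rev (sorted_list_of_multiset ms)"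
  have m: "Mlarg s x = Ls!(s-1)" by (simp add: Mlarg_def Ls_def ms_def)
  have mL: "mset Ls = ms" by (simp add: Ls_def)
  have "length Ls = size ms" by (metis mL size_mset)
  hence len: "length Ls = CARD('n)" by (simp add: ms_def)
  have setL: "set Ls = range (\<lambda>i. \<bar>x$i\<bar>)"
  proof -
    have "set Ls = set_mset ms" by (metis mL set_mset_mset)
    thus ?thesis by (simp add: ms_def)
  qed
  have sorted: "sorted_wrt (\<ge>) Ls" by (simp add: Ls_def sorted_wrt_rev)
  have cnt: "length (filter P Ls) = card {i. P \<bar>x$i\<bar>}" for P
  proof -
    have "length (filter P Ls) = size (filter_mset P (mset Ls))"
      by (metis mset_filter size_mset)
    also have "\<dots> = card {i. P \<bar>x$i\<bar>}"
      by (simp add: mL ms_def filter_mset_image_mset)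
    finally show ?thesis .
  qed
  have lt: "s - 1 < length Ls" using s0 sn len by simp
  have mem: "Ls!(s-1) \<in> set Ls" using lt by simp
  then obtain j where j: "Mlarg s x = \<bar>x$j\<bar>" using setL m by auto
  have c1: "card {i. \<bar>x$i\<bar> > Mlarg s x} \<le> s - 1"
  proof -
    have "{k. k < length Ls \<and> Ls!k > Ls!(s-1)} \<subseteq> {..<s-1}"
    proof
      fix k assume k: "k \<in> {k. k < length Ls \<and> Ls!k > Ls!(s-1)}"
      show "k \<in> {..<s-1}"
      proof (rule ccontr)
        assume "k \<notin> {..<s-1}"
        hence "s - 1 < k \<or> s - 1 = k" by auto
        thus False using k sorted unfolding sorted_wrt_iff_nth_less by fastforce
      qed
    qed
    hence "card {k. k < length Ls \<and> Ls!k > Ls!(s-1)} \<le> s - 1"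
      by (metis card_lessThan card_mono finite_lessThan)
    thus ?thesis using cnt[of "\<lambda>v. v > Ls!(s-1)"] m by (simp add: length_filter_conv_card)
  qed
  have c2: "s \<le> card {i. \<bar>x$i\<bar> \<ge> Mlarg s x}"
  proof -
    have "{..<s} \<subseteq> {k. k < length Ls \<and> Ls!k \<ge> Ls!(s-1)}"
    proof
      fix k assume k: "k \<in> {..<s}"
      hence "k < s - 1 \<or> k = s - 1" by auto
      thus "k \<in> {k. k < length Ls \<and> Ls!k \<ge> Ls!(s-1)}"
        using k lt sorted unfolding sorted_wrt_iff_nth_less by fastforce
    qed
    hence "s \<le> card {k. k < length Ls \<and> Ls!k \<ge> Ls!(s-1)}"
      by (metis card_lessThan card_mono finite_Collect_conjI finite_Collect_less_nat)
    thus ?thesis using cnt[of "\<lambda>v. v \<ge> Ls!(s-1)"] m by (simp add: length_filter_conv_card)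
  qed
  show ?thesis using j c1 c2 by auto
qed

lemma norm_sq_vec: "(norm (w::real^'n))^2 = (\<Sum>k\<in>UNIV. (w$k)^2)"
  unfolding power2_norm_eq_inner by (simp add: inner_vec_def power2_eq_square)

lemma D_upd:
  fixes v y :: "real^'n"
  shows "(\<Sum>k\<in>UNIV. ((\<chi> k. if k = i then a else v$k)$k - y$k)^2) =
     (\<Sum>k\<in>UNIV. (v$k - y$k)^2) - (v$i - y$i)^2 + (a - y$i)^2"
proof -
  have "(\<Sum>k\<in>UNIV. ((\<chi> k. if k = i then a else v$k)$k - y$k)^2) =
     (a - y$i)^2 + (\<Sum>k\<in>UNIV-{i}. ((\<chi> k. if k = i then a else v$k)$k - y$k)^2)"
    by (subst sum.remove[of UNIV i]) auto
  also have "(\<Sum>k\<in>UNIV-{i}. ((\<chi> k. if k = i then a else v$k)$k - y$k)^2) =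
     (\<Sum>k\<in>UNIV-{i}. (v$k - y$k)^2)" by (rule sum.cong) auto
  also have "(\<Sum>k\<in>UNIV. (v$k - y$k)^2) = (v$i - y$i)^2 + (\<Sum>k\<in>UNIV-{i}. (v$k - y$k)^2)"
    by (subst sum.remove[of UNIV i]) auto
  ultimately show ?thesis by simp
qed

lemma supp_upd:
  "{k. (\<chi> k. if k = i then a else (v::real^'n)$k)$k \<noteq> 0} \<subseteq> (if a = 0 then {k. v$k \<noteq> 0} - {i} else insert i {k. v$k \<noteq> 0})"
  by auto

theorem lemma2p2:
  fixes f :: "real ^ 'n \<Rightarrow> real"
    and grad :: "real ^ 'n \<Rightarrow> real ^ 'n"
    and s :: nat and L :: real and xs :: "real ^ 'n"
  assumes deriv: "\<And>x. (f has_derivative (\<lambda>h. grad x \<bullet> h)) (at x)"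
    and cont: "continuous_on UNIV grad"
    and s_pos: "0 < s" and s_lt: "s < CARD('n)"
    and L_pos: "L > 0"
  shows "(xs \<in> sparse_set s \<and> xs \<in> proj (sparse_set s) (xs - (1 / L) *\<^sub>R grad xs))
     \<longleftrightarrow> (l0norm xs \<le> s \<and>
          (\<forall>i \<in> I0 xs. \<bar>grad xs $ i\<bar> \<le> L * Mlarg s xs) \<and>
          (\<forall>i \<in> I1 xs. grad xs $ i = 0))"
proof -
  define g where "g = grad xs"
  define y where "y = xs - (1 / L) *\<^sub>R g"
  define D where "D v = (\<Sum>k\<in>UNIV. (v$k - y$k)^2)" for v :: "real^'n"
  define S where "S = {k. xs$k \<noteq> 0}"
  define m where "m = Mlarg s xs"
  have yc: "y$k = xs$k - g$k / L" for k by (simp add: y_def)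
  have nD: "(norm (v - y))^2 = D v" for v by (simp add: norm_sq_vec D_def)
  have Dxs: "D xs = (\<Sum>k\<in>UNIV. (g$k / L)^2)" by (simp add: D_def yc)
  have Dupd: "D (\<chi> k. if k = i then a else v$k) = D v - (v$i - y$i)^2 + (a - y$i)^2" for v i a
    unfolding D_def by (rule D_upd)
  have MP: "m \<ge> 0 \<and> (\<exists>j. m = \<bar>xs$j\<bar>) \<and>
         card {i. \<bar>xs$i\<bar> > m} \<le> s - 1 \<and> s \<le> card {i. \<bar>xs$i\<bar> \<ge> m}"
    unfolding m_def using Mlarg_props[where x=xs, OF s_pos] s_lt by simp
  have proj_iff: "xs \<in> proj (sparse_set s) y \<longleftrightarrow> l0norm xs \<le> s \<and> (\<forall>z. l0norm z \<le> s \<longrightarrow> D xs \<le> D z)"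
    by (simp add: proj_def sparse_set_def nD)
  have l0: "l0norm v = card {k. v$k \<noteq> 0}" for v :: "real^'n" by (simp add: l0norm_def)
  have cardS: "l0norm xs = card S" by (simp add: l0 S_def)
  show ?thesis
  proof
    assume H: "xs \<in> sparse_set s \<and> xs \<in> proj (sparse_set s) (xs - (1 / L) *\<^sub>R grad xs)"
    hence ls: "card S \<le> s" and opt: "\<And>z. l0norm z \<le> s \<Longrightarrow> D xs \<le> D z"
      using proj_iff cardS by (auto simp: y_def g_def)
    have a: "g$i = 0" if iS: "i \<in> S" for i
    proof -
      define z where "z = (\<chi> k. if k = i then y$i else xs$k)"
      have "{k. z$k \<noteq> 0} \<subseteq> S" using iS by (auto simp: z_def S_def)
      hence "l0norm z \<le> s" using ls by (metis l0 card_mono finite order_trans)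
      hence "D xs \<le> D z" by (rule opt)
      moreover have "D z = D xs - (g$i/L)^2" by (simp add: z_def Dupd yc)
      ultimately have "(g$i/L)^2 \<le> 0" by simp
      thus ?thesis using L_pos by simp
    qed
    have b: "\<bar>g$i\<bar> \<le> L * m" if iS: "i \<notin> S" for i
    proof (cases "m > 0")
      case True
      then obtain j where j: "m = \<bar>xs$j\<bar>" using MP by auto
      hence jS: "j \<in> S" using True by (auto simp: S_def)
      hence ij: "i \<noteq> j" using iS by auto
      define z1 where "z1 = (\<chi> k. if k = j then 0 else xs$k)"
      define z where "z = (\<chi> k. if k = i then y$i else z1$k)"
      have "{k. z$k \<noteq> 0} \<subseteq> insert i (S - {j})" by (auto simp: z_def z1_def S_def)
      hence "card {k. z$k \<noteq> 0} \<le> card (insert i (S - {j}))" by (simp add: card_mono)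
      also have "\<dots> = card S"
      proof -
        have "card S > 0" using jS card_gt_0_iff by fastforce
        thus ?thesis using iS jS by simp
      qed
      finally have "l0norm z \<le> s" using ls l0 by simp
      hence "D xs \<le> D z" by (rule opt)
      moreover have "D z = D xs + (xs$j)^2 - (g$i/L)^2"
        using ij iS a[OF jS] by (simp add: z_def z1_def Dupd yc S_def)
      ultimately have "(g$i/L)^2 \<le> m^2" using j by simp
      hence "\<bar>g$i/L\<bar> \<le> m" using True by (metis abs_le_square_iff abs_of_pos)
      thus ?thesis using L_pos by (simp add: abs_div pos_divide_le_eq mult.commute)
    next
      case False
      hence m0: "m = 0" using MP by simp
      have "card S \<le> s - 1" using MP m0 by (simp add: S_def)
      define z where "z = (\<chi> k. if k = i then y$i else xs$k)"
      have "{k. z$k \<noteq> 0} \<subseteq> insert i S" by (auto simp: z_def S_def)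
      hence "card {k. z$k \<noteq> 0} \<le> card (insert i S)" by (simp add: card_mono)
      also have "\<dots> = Suc (card S)" using iS by simp
      finally have "l0norm z \<le> s" using \<open>card S \<le> s - 1\<close> l0 s_pos by simp
      hence "D xs \<le> D z" by (rule opt)
      moreover have "D z = D xs - (g$i/L)^2" using iS by (simp add: z_def Dupd yc S_def)
      ultimately have "(g$i/L)^2 \<le> 0" by simp
      thus ?thesis using L_pos m0 by simp
    qed
    show "l0norm xs \<le> s \<and>
          (\<forall>i \<in> I0 xs. \<bar>grad xs $ i\<bar> \<le> L * Mlarg s xs) \<and>
          (\<forall>i \<in> I1 xs. grad xs $ i = 0)"
      using ls cardS a b by (auto simp: I0_def I1_def S_def g_def m_def)
  next
    assume H: "l0norm xs \<le> s \<and>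
          (\<forall>i \<in> I0 xs. \<bar>grad xs $ i\<bar> \<le> L * Mlarg s xs) \<and>
          (\<forall>i \<in> I1 xs. grad xs $ i = 0)"
    hence ls: "card S \<le> s" and gS: "\<And>k. k \<in> S \<Longrightarrow> g$k = 0"
      and gN: "\<And>k. k \<notin> S \<Longrightarrow> \<bar>g$k\<bar> \<le> L * m"
      using cardS by (auto simp: I0_def I1_def S_def g_def m_def)
    have yN: "(y$k)^2 \<le> m^2" if "k \<notin> S" for k
    proof -
      have "\<bar>g$k\<bar> / L \<le> m" using gN[OF that] L_pos by (simp add: pos_divide_le_eq mult.commute)
      hence "\<bar>y$k\<bar> \<le> m" using that L_pos by (simp add: yc S_def abs_div)
      thus ?thesis by (metis abs_ge_zero power2_abs power_mono)
    qed
    have yS: "y$k = xs$k" if "k \<in> S" for k using gS[OF that] by (simp add: yc)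
    have yNeq: "(y$k)^2 = (g$k/L)^2" if "k \<notin> S" for k using that by (simp add: yc S_def power2_eq_square)
    have "\<forall>z. l0norm z \<le> s \<longrightarrow> D xs \<le> D z"
    proof (intro allI impI)
      fix z :: "real^'n" assume lz: "l0norm z \<le> s"
      define T where "T = {k. z$k \<noteq> 0}"
      have cT: "card T \<le> s" using lz by (simp add: l0 T_def)
      define R where "R = UNIV - (S \<union> T)"
      have key: "(\<Sum>k\<in>T-S. (y$k)^2) \<le> (\<Sum>k\<in>S-T. (y$k)^2)"
      proof (cases "m > 0")
        case False
        hence "m = 0" using MP by simp
        have "(\<Sum>k\<in>T-S. (y$k)^2) = 0"
        proof (intro sum.neutral ballI)
          fix k assume "k \<in> T-S"
          hence "(y$k)^2 \<le> 0" using yN \<open>m = 0\<close> by auto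
          thus "(y$k)^2 = 0" using zero_le_power2[of "y$k"] by linarith
        qed
        moreover have "0 \<le> (\<Sum>k\<in>S-T. (y$k)^2)" by (simp add: sum_nonneg)
        ultimately show ?thesis by simp
      next
        case True
        have sub: "{i. \<bar>xs$i\<bar> \<ge> m} \<subseteq> S" using True by (auto simp: S_def)
        have "s \<le> card S" using MP sub by (meson card_mono finite order_trans)
        hence cS: "card S = s" using ls by simp
        have ymS: "m^2 \<le> (y$k)^2" if kS: "k \<in> S" for k
        proof -
          have "m \<le> \<bar>xs$k\<bar>"
          proof (rule ccontr)
            assume "\<not> m \<le> \<bar>xs$k\<bar>"
            hence "{i. \<bar>xs$i\<bar> \<ge> m} \<subseteq> S - {k}" using sub by auto
            hence "card {i. \<bar>xs$i\<bar> \<ge> m} \<le> card (S - {k})" by (simp add: card_mono)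
            also have "\<dots> = s - 1" using kS cS by simp
            finally show False using MP s_pos by linarith
          qed
          thus ?thesis using yS[OF kS] True by (metis abs_ge_zero less_imp_le power2_abs power_mono)
        qed
        have "card (T - S) \<le> card (S - T)"
        proof -
          have "card (T - S) = card T - card (T \<inter> S)" by (simp add: card_Diff_subset_Int)
          moreover have "card (S - T) = card S - card (S \<inter> T)" by (simp add: card_Diff_subset_Int)
          moreover have "card (T \<inter> S) \<le> card T" by (simp add: card_mono)
          ultimately show ?thesis using cT cS by (simp add: Int_commute)
        qed
        have "(\<Sum>k\<in>T-S. (y$k)^2) \<le> of_nat (card (T - S)) * m^2"
          using yN sum_bounded_above[of "T-S" "\<lambda>k. (y$k)^2" "m^2"] by auto
        also have "\<dots> \<le> of_nat (card (S - T)) * m^2"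
          using \<open>card (T - S) \<le> card (S - T)\<close> by (simp add: mult_right_mono)
        also have "\<dots> \<le> (\<Sum>k\<in>S-T. (y$k)^2)"
          using ymS sum_bounded_below[of "S-T" "m^2" "\<lambda>k. (y$k)^2"] by auto
        finally show ?thesis .
      qed
      have "D xs = (\<Sum>k\<in>UNIV - S. (g$k/L)^2) + (\<Sum>k\<in>S. (g$k/L)^2)"
        unfolding Dxs by (rule sum.subset_diff) auto
      also have "(\<Sum>k\<in>S. (g$k/L)^2) = 0" using gS by simp
      also have "(\<Sum>k\<in>UNIV - S. (g$k/L)^2) = (\<Sum>k\<in>UNIV - S. (y$k)^2)"
        using yNeq by (intro sum.cong) auto
      also have "\<dots> = (\<Sum>k\<in>R. (y$k)^2) + (\<Sum>k\<in>T-S. (y$k)^2)"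
      proof -
        have "(\<Sum>k\<in>UNIV - S. (y$k)^2) = (\<Sum>k\<in>(UNIV - S) - (T - S). (y$k)^2) + (\<Sum>k\<in>T-S. (y$k)^2)"
          by (rule sum.subset_diff) auto
        moreover have "(UNIV - S) - (T - S) = R" by (auto simp: R_def)
        ultimately show ?thesis by simp
      qed
      also have "\<dots> + 0 \<le> (\<Sum>k\<in>R. (y$k)^2) + (\<Sum>k\<in>S-T. (y$k)^2)" using key by simp
      also have "\<dots> = (\<Sum>k\<in>UNIV - T. (y$k)^2)"
      proof -
        have "(\<Sum>k\<in>UNIV - T. (y$k)^2) = (\<Sum>k\<in>(UNIV - T) - (S - T). (y$k)^2) + (\<Sum>k\<in>S-T. (y$k)^2)"
          by (rule sum.subset_diff) auto
        moreover have "(UNIV - T) - (S - T) = R" by (auto simp: R_def)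
        ultimately show ?thesis by simp
      qed
      also have "\<dots> = (\<Sum>k\<in>UNIV - T. (z$k - y$k)^2)"
        by (intro sum.cong) (auto simp: T_def)
      also have "\<dots> \<le> (\<Sum>k\<in>UNIV - T. (z$k - y$k)^2) + (\<Sum>k\<in>T. (z$k - y$k)^2)"
        by (simp add: sum_nonneg)
      also have "\<dots> = D z" unfolding D_def by (rule sum.subset_diff[symmetric]) auto
      finally show "D xs \<le> D z" by simp
    qed
    thus "xs \<in> sparse_set s \<and> xs \<in> proj (sparse_set s) (xs - (1 / L) *\<^sub>R grad xs)"
      using proj_iff ls cardS by (simp add: sparse_set_def y_def g_def)
  qed
qed

end
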